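(* There exists a non-empty open set $\mathcal{U}_1\subset(0,\infty)^5$ of parameter values $(A,r,\beta_0,a,\mu)$ such that, for every parameter value in $\mathcal{U}_1$, the system $$\dot S = S(A-S)-\beta_0 IS,\qquad \dot I=\beta_0 IS-\mu I-\frac{rI}{a+I}$$ satisfies $\mathcal{R}_0=\dfrac{\beta_0A}{\mu+\frac{r}{a}}<1$ and its flow has exactly two endemic equilibria, one of which is a sink and the other a saddle.
   Context: The system is an autonomous planar ODE in the variables $S$ (susceptible) and $I$ (infectious), considered on the closed quadrant $S,I\ge 0$, with positive parameters $A,r,\beta_0,a,\mu$; here $\mu$ denotes the total death rate of infectious individuals (natural death rate plus disease-induced death rate). The quantity $\mathcal{R}_0=\beta_0A/(\mu+r/a)$ is called the basic reproduction number. An endemic equilibrium is an equilibrium (zero of the vector field) with $I\neq 0$; the equilibria with $I=0$, namely $(0,0)$ and $(A,0)$, are the disease-free equilibria. A sink is an equilibrium whose Jacobian eigenvalues all have negative real part; a saddle is an equilibrium whose Jacobian has two real eigenvalues of opposite signs. *)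

theory Defs
  imports "HOL-Analysis.Analysis"
begin

type_synonym params = "real \<times> real \<times> real \<times> real \<times> real"
  (* (A, r, beta0, a, mu) *)

definition fS :: "params \<Rightarrow> real \<Rightarrow> real \<Rightarrow> real" where
  "fS p S I = (case p of (A, r, b0, a, mu) \<Rightarrow> S * (A - S) - b0 * I * S)"

definition fI :: "params \<Rightarrow> real \<Rightarrow> real \<Rightarrow> real" where
  "fI p S I = (case p of (A, r, b0, a, mu) \<Rightarrow> b0 * I * S - mu * I - r * I / (a + I))"

definition R0 :: "params \<Rightarrow> real" where
  "R0 p = (case p of (A, r, b0, a, mu) \<Rightarrow> b0 * A / (mu + r / a))"

definition is_equilibrium :: "params \<Rightarrow> real \<times> real \<Rightarrow> bool" where
  "is_equilibrium p e = (fS p (fst e) (snd e) = 0 \<and> fI p (fst e) (snd e) = 0)"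

definition endemic_equilibria :: "params \<Rightarrow> (real \<times> real) set" where
  "endemic_equilibria p = {e. fst e \<ge> 0 \<and> snd e \<ge> 0 \<and> snd e \<noteq> 0 \<and> is_equilibrium p e}"

definition jac :: "params \<Rightarrow> real \<times> real \<Rightarrow> real \<times> real \<times> real \<times> real" where
  "jac p e = (case e of (S, I) \<Rightarrow>
     (deriv (\<lambda>x. fS p x I) S, deriv (\<lambda>y. fS p S y) I,
      deriv (\<lambda>x. fI p x I) S, deriv (\<lambda>y. fI p S y) I))"

definition jac_eigenvalue :: "params \<Rightarrow> real \<times> real \<Rightarrow> complex \<Rightarrow> bool" where
  "jac_eigenvalue p e z = (case jac p e of (j11, j12, j21, j22) \<Rightarrow>
     (of_real j11 - z) * (of_real j22 - z) - of_real j12 * of_real j21 = 0)"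

definition is_sink :: "params \<Rightarrow> real \<times> real \<Rightarrow> bool" where
  "is_sink p e = (is_equilibrium p e \<and> (\<forall>z. jac_eigenvalue p e z \<longrightarrow> Re z < 0))"

definition is_saddle :: "params \<Rightarrow> real \<times> real \<Rightarrow> bool" where
  "is_saddle p e = (is_equilibrium p e \<and>
     (\<exists>l1 l2 :: real. l1 < 0 \<and> 0 < l2 \<and> jac_eigenvalue p e (of_real l1) \<and> jac_eigenvalue p e (of_real l2)))"

end

theory Submission
  imports Defs
begin

lemma jac_eq:
  assumes "a + I \<noteq> 0"
  shows "jac (A,r,b0,a,mu) (S,I) = (A - 2*S - b0*I, -(b0*S), b0*I, b0*S - mu - r*a/(a+I)^2)"
proof -
  have 1: "((\<lambda>x. x*(A-x) - b0*I*x) has_real_derivative (A - 2*S - b0*I)) (at S)"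
    by (auto intro!: derivative_eq_intros simp: algebra_simps)
  have 2: "((\<lambda>y. S*(A-S) - b0*y*S) has_real_derivative (-(b0*S))) (at I)"
    by (auto intro!: derivative_eq_intros simp: algebra_simps)
  have 3: "((\<lambda>x. b0*I*x - mu*I - r*I/(a+I)) has_real_derivative (b0*I)) (at S)"
    by (auto intro!: derivative_eq_intros simp: algebra_simps)
  have 4: "((\<lambda>y. b0*y*S - mu*y - r*y/(a+y)) has_real_derivative (b0*S - mu - r*a/(a+I)^2)) (at I)"
    using assms by (auto intro!: derivative_eq_intros simp: field_simps power2_eq_square)
  show ?thesis
    unfolding jac_def fS_def fI_def
    using DERIV_imp_deriv[OF 1] DERIV_imp_deriv[OF 2] DERIV_imp_deriv[OF 3] DERIV_imp_deriv[OF 4]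
    by simp
qed

lemma sink_crit:
  fixes a b c d :: real and z :: complex
  assumes "(of_real a - z) * (of_real d - z) - of_real b * of_real c = 0"
    and "a + d < 0" and "a*d - b*c > 0"
  shows "Re z < 0"
proof -
  obtain x y where z: "z = Complex x y" by (cases z)
  from assms(1) have re: "(a-x)*(d-x) - y*y - b*c = 0" and im: "-(a-x)*y - (d-x)*y = 0"
    unfolding z complex_eq_iff by (simp_all add: algebra_simps)
  from im have "y*(2*x - (a+d)) = 0" by (simp add: algebra_simps)
  hence "y = 0 \<or> 2*x = a + d" by simp
  then show ?thesis
  proof
    assume y: "y = 0"
    show ?thesis
    proof (rule ccontr)
      assume "\<not> Re z < 0"
      hence x: "x \<ge> 0" using z by simp
      have "(a-x)*(d-x) = a*d - x*(a+d) + x*x" by (simp add: algebra_simps)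
      moreover have "x*(a+d) \<le> 0" using x assms(2) by (simp add: mult_nonneg_nonpos)
      moreover have "x*x \<ge> 0" by simp
      moreover from re y have "(a-x)*(d-x) = b*c" by simp
      ultimately show False using assms(3) by linarith
    qed
  next
    assume "2*x = a+d" thus ?thesis using z assms(2) by simp
  qed
qed

lemma saddle_crit:
  fixes a b c d :: real
  assumes "a*d - b*c < 0"
  shows "\<exists>l1 l2 :: real. l1 < 0 \<and> 0 < l2 \<and>
     (of_real a - of_real l1) * (of_real d - of_real l1) - of_real b * of_real c = (0::complex) \<and>
     (of_real a - of_real l2) * (of_real d - of_real l2) - of_real b * of_real c = (0::complex)"
proof -
  define t where "t = a + d"
  define dt where "dt = a*d - b*c"
  define w where "w = sqrt (t^2 - 4*dt)"
  have tw: "t^2 - 4*dt \<ge> 0" using assms dt_def by (smt (verit) zero_le_power2)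
  hence w2: "w^2 = t^2 - 4*dt" unfolding w_def by simp
  have w0: "w \<ge> 0" unfolding w_def using tw by simp
  have "\<bar>t\<bar>^2 < w^2" using w2 assms dt_def by simp
  hence wt: "w > \<bar>t\<bar>" using w0 by (rule power_less_imp_less_base)
  define l1 where "l1 = (t - w)/2"
  define l2 where "l2 = (t + w)/2"
  have r: "(a - l)*(d - l) - b*c = 0" if "l = l1 \<or> l = l2" for l
  proof -
    have "(a - l)*(d - l) - b*c = l^2 - t*l + dt" unfolding t_def dt_def by (simp add: algebra_simps power2_eq_square)
    also have "\<dots> = ((2*l - t)^2 - (t^2 - 4*dt))/4" by (simp add: algebra_simps power2_eq_square)
    also have "2*l - t = w \<or> 2*l - t = -w" using that unfolding l1_def l2_def by auto
    hence "(2*l - t)^2 = w^2" by auto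
    also have "w^2 - (t^2 - 4*dt) = 0" using w2 by simp
    finally show ?thesis by simp
  qed
  have c: "(of_real a - of_real l) * (of_real d - of_real l) - of_real b * of_real c = (0::complex)"
    if "l = l1 \<or> l = l2" for l
  proof -
    have "(of_real a - of_real l) * (of_real d - of_real l) - of_real b * of_real c
       = (of_real ((a - l)*(d - l) - b*c) :: complex)" by simp
    thus ?thesis using r[OF that] by simp
  qed
  show ?thesis
    apply (rule exI[of _ l1], rule exI[of _ l2])
    using c[of l1] c[of l2] wt by (auto simp: l1_def l2_def simp del: of_real_diff of_real_add of_real_divide)
qed

lemma eq_char:
  fixes A r b0 a mu S I :: real
  assumes pos: "r > 0" "b0 > 0" "a > 0" "mu > 0" and I: "I > 0"
  shows "(S \<ge> 0 \<and> is_equilibrium (A,r,b0,a,mu) (S,I)) \<longleftrightarrow>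
         (S = A - b0*I \<and> (b0*S - mu)*(a+I) = r)"
proof
  assume h: "S \<ge> 0 \<and> is_equilibrium (A,r,b0,a,mu) (S,I)"
  hence e1: "S*(A-S) - b0*I*S = 0" and e2: "b0*I*S - mu*I - r*I/(a+I) = 0"
    by (auto simp: is_equilibrium_def fS_def fI_def)
  have aI: "a + I > 0" using pos I by simp
  have "I*(b0*S - mu - r/(a+I)) = 0" using e2 by (simp add: algebra_simps)
  hence k: "b0*S - mu - r/(a+I) = 0" using I by simp
  hence k2: "(b0*S - mu)*(a+I) = r" using aI by (simp add: field_simps)
  have "r/(a+I) > 0" using pos aI by simp
  hence "b0*S > 0" using k pos by linarith
  hence Sp: "S > 0" using pos by (simp add: zero_less_mult_iff)
  have "S*(A - S - b0*I) = 0" using e1 by (simp add: algebra_simps)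
  hence "S = A - b0*I" using Sp by simp
  thus "S = A - b0*I \<and> (b0*S - mu)*(a+I) = r" using k2 by simp
next
  assume h: "S = A - b0*I \<and> (b0*S - mu)*(a+I) = r"
  have aI: "a + I > 0" using pos I by simp
  have k: "b0*S - mu = r/(a+I)" using h aI by (simp add: field_simps)
  have "r/(a+I) > 0" using pos aI by simp
  hence "b0*S > 0" using k pos by linarith
  hence Sp: "S > 0" using pos by (simp add: zero_less_mult_iff)
  have "S*(A-S) - b0*I*S = S*(A - S - b0*I)" by (simp add: algebra_simps)
  also have "\<dots> = 0" using h by simp
  finally have e1: "S*(A-S) - b0*I*S = 0" .
  have "b0*I*S - mu*I - r*I/(a+I) = I*(b0*S - mu - r/(a+I))" by (simp add: algebra_simps)
  also have "\<dots> = 0" using k by simp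
  finally have e2: "b0*I*S - mu*I - r*I/(a+I) = 0" .
  show "S \<ge> 0 \<and> is_equilibrium (A,r,b0,a,mu) (S,I)"
    using Sp e1 e2 by (simp add: is_equilibrium_def fS_def fI_def)
qed

lemma jac_at:
  fixes A r b0 a mu S I :: real
  assumes aI: "a + I > 0" and h: "S = A - b0*I" "(b0*S - mu)*(a+I) = r"
  shows "jac (A,r,b0,a,mu) (S,I) = (-S, -(b0*S), b0*I, r*I/(a+I)^2)"
proof -
  have k: "b0*S - mu = r/(a+I)" using h aI by (simp add: field_simps)
  have "b0*S - mu - r*a/(a+I)^2 = r/(a+I) - r*a/(a+I)^2" using k by simp
  also have "r/(a+I) = r*(a+I)/(a+I)^2" using aI by (simp add: power2_eq_square)
  also have "r*(a+I)/(a+I)^2 - r*a/(a+I)^2 = (r*(a+I) - r*a)/(a+I)^2" by (simp add: diff_divide_distrib)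
  also have "r*(a+I) - r*a = r*I" by (simp add: algebra_simps)
  finally have "b0*S - mu - r*a/(a+I)^2 = r*I/(a+I)^2" .
  moreover have "A - 2*S - b0*I = -S" using h by simp
  ultimately show ?thesis using jac_eq[of a I A r b0 mu S] aI by simp
qed

lemma main:
  fixes A r b0 a mu :: real
  defines "B \<equiv> b0*A - mu - a*b0^2" and "C \<equiv> a*(b0*A - mu) - r"
  defines "D \<equiv> B^2 + 4*b0^2*C"
  defines "s \<equiv> sqrt D"
  defines "I1 \<equiv> (B - s)/(2*b0^2)" and "I2 \<equiv> (B + s)/(2*b0^2)"
  assumes pos: "A > 0" "r > 0" "b0 > 0" "a > 0" "mu > 0"
    and R: "b0*A/(mu + r/a) < 1" and Bp: "B > 0" and Dp: "D > 0"
    and T: "(A - b0*I2)*(a+I2)^2 > r*I2"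
  shows "\<exists>e1 e2. e1 \<noteq> e2 \<and> endemic_equilibria (A,r,b0,a,mu) = {e1, e2} \<and>
                is_sink (A,r,b0,a,mu) e1 \<and> is_saddle (A,r,b0,a,mu) e2"
proof -
  let ?p = "(A,r,b0,a,mu)"
  have "r/a > 0" using pos by simp
  hence "mu + r/a > 0" using pos by linarith
  hence "b0*A < mu + r/a" using R by (simp add: divide_less_eq)
  hence "a*(b0*A) < a*(mu + r/a)" using pos by simp
  hence Cn: "C < 0" unfolding C_def using pos by (simp add: algebra_simps)
  have s2: "s^2 = D" unfolding s_def using Dp by simp
  have sp: "s > 0" unfolding s_def using Dp by simp
  have b2: "b0^2 > 0" using pos by simp
  have "4*b0^2*C < 0" using b2 Cn by (simp add: mult_pos_neg)
  hence "s^2 < B^2" using s2 unfolding D_def by simp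
  hence sB: "s < B" using Bp sp by (simp add: power_less_imp_less_base)
  have I1p: "I1 > 0" unfolding I1_def using sB b2 by simp
  have I2p: "I2 > 0" unfolding I2_def using Bp sp b2 by simp
  have d1: "2*b0^2*I1 - B = -s" unfolding I1_def using b2 by simp
  have d2: "2*b0^2*I2 - B = s" unfolding I2_def using b2 by simp
  have I12: "I1 \<noteq> I2" using d1 d2 sp by auto
  have qid: "4*b0^2*((b0*(A - b0*I) - mu)*(a+I) - r) = D - (2*b0^2*I - B)^2" for I
    unfolding D_def B_def C_def by (simp add: algebra_simps power2_eq_square)
  have roots: "(b0*(A - b0*I) - mu)*(a+I) = r \<longleftrightarrow> I = I1 \<or> I = I2" for I
  proof -
    have "(b0*(A - b0*I) - mu)*(a+I) = r \<longleftrightarrow> 4*b0^2*((b0*(A - b0*I) - mu)*(a+I) - r) = 0"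
      using b2 by simp
    also have "\<dots> \<longleftrightarrow> (2*b0^2*I - B)^2 = s^2" using qid[of I] s2 by auto
    also have "\<dots> \<longleftrightarrow> 2*b0^2*I - B = s \<or> 2*b0^2*I - B = -s"
      by (simp add: power2_eq_iff)
    also have "\<dots> \<longleftrightarrow> I = I2 \<or> I = I1"
      using d1 d2 b2 by (metis mult_cancel_left add_right_cancel diff_add_cancel mult_eq_0_iff
           power_not_zero zero_neq_numeral less_irrefl)
    finally show ?thesis by auto
  qed
  define S1 where "S1 = A - b0*I1"
  define S2 where "S2 = A - b0*I2"
  have EE: "endemic_equilibria ?p = {(S2,I2), (S1,I1)}"
  proof (rule set_eqI)
    fix e :: "real \<times> real"
    obtain S I where e: "e = (S,I)" by (cases e)
    show "e \<in> endemic_equilibria ?p \<longleftrightarrow> e \<in> {(S2,I2), (S1,I1)}"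
    proof (cases "I > 0")
      case True
      have "e \<in> endemic_equilibria ?p \<longleftrightarrow> (S \<ge> 0 \<and> is_equilibrium ?p (S,I))"
        using True e by (auto simp: endemic_equilibria_def)
      also have "\<dots> \<longleftrightarrow> (S = A - b0*I \<and> (b0*S - mu)*(a+I) = r)"
        using eq_char[of r b0 a mu I S A] pos True by simp
      also have "\<dots> \<longleftrightarrow> (S = A - b0*I \<and> (I = I1 \<or> I = I2))"
        using roots by auto
      also have "\<dots> \<longleftrightarrow> e \<in> {(S2,I2), (S1,I1)}" using e S1_def S2_def by auto
      finally show ?thesis .
    next
      case False
      thus ?thesis using e I1p I2p by (auto simp: endemic_equilibria_def)
    qed
  qed
  have eqS1: "(b0*S1 - mu)*(a+I1) = r" using roots S1_def by simp
  have eqS2: "(b0*S2 - mu)*(a+I2) = r" using roots S2_def by simp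
  have J1: "jac ?p (S1,I1) = (-S1, -(b0*S1), b0*I1, r*I1/(a+I1)^2)"
    using jac_at[of a I1 S1 A b0 mu r] I1p pos eqS1 S1_def by simp
  have J2: "jac ?p (S2,I2) = (-S2, -(b0*S2), b0*I2, r*I2/(a+I2)^2)"
    using jac_at[of a I2 S2 A b0 mu r] I2p pos eqS2 S2_def by simp
  have E1: "is_equilibrium ?p (S1,I1)" and E2: "is_equilibrium ?p (S2,I2)"
    using eq_char[of r b0 a mu I1 S1 A] eq_char[of r b0 a mu I2 S2 A] pos I1p I2p eqS1 eqS2
      S1_def S2_def by auto
  have Sp: "S > 0" if "a + I > 0" "(b0*S - mu)*(a+I) = r" for S I
  proof -
    have "b0*S - mu > 0" using that pos by (metis zero_less_mult_iff order_less_asym)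
    hence "b0*S > 0" using pos by linarith
    thus ?thesis using pos by (simp add: zero_less_mult_iff)
  qed
  have S1p: "S1 > 0" using Sp[OF _ eqS1] pos I1p by simp
  have S2p: "S2 > 0" using Sp[OF _ eqS2] pos I2p by simp
  have detid: "(-S)*(r*I/(a+I)^2) - (-(b0*S))*(b0*I) = S*I*(2*b0^2*I - B)/(a+I)"
    if "a + I > 0" "(b0*S - mu)*(a+I) = r" "S = A - b0*I" for S I
  proof -
    have 1: "r*I/(a+I)^2 = (b0*S - mu)*I/(a+I)" using that(1,2)
      by (auto simp: power2_eq_square)
    have 2: "2*b0^2*I - B = b0^2*(a+I) - (b0*S-mu)" unfolding that(3) B_def
      by (simp add: algebra_simps power2_eq_square)
    show ?thesis unfolding 1 2 using that(1) by (simp add: field_simps power2_eq_square)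
  qed
  have sink: "is_sink ?p (S2,I2)"
  proof -
    have aI: "a + I2 > 0" using pos I2p by simp
    have det: "(-S2)*(r*I2/(a+I2)^2) - (-(b0*S2))*(b0*I2) > 0"
      using detid[OF aI eqS2 S2_def] d2 sp S2p I2p aI by simp
    have "S2*(a+I2)^2 > r*I2" using T S2_def by simp
    hence "r*I2/(a+I2)^2 < S2" using aI by (simp add: divide_less_eq)
    hence tr: "-S2 + r*I2/(a+I2)^2 < 0" by linarith
    show ?thesis unfolding is_sink_def jac_eigenvalue_def J2
      using E2 sink_crit[OF _ tr det] by auto
  qed
  have saddle: "is_saddle ?p (S1,I1)"
  proof -
    have aI: "a + I1 > 0" using pos I1p by simp
    have det: "(-S1)*(r*I1/(a+I1)^2) - (-(b0*S1))*(b0*I1) < 0"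
      using detid[OF aI eqS1 S1_def] d1 sp S1p I1p aI by (simp add: mult_pos_neg divide_neg_pos)
    show ?thesis unfolding is_saddle_def jac_eigenvalue_def J1 prod.case
      using E1 saddle_crit[OF det] by blast
  qed
  show ?thesis
    apply (rule exI[of _ "(S2,I2)"], rule exI[of _ "(S1,I1)"])
    using EE sink saddle I12 by auto
qed

definition pA :: "params \<Rightarrow> real" where "pA p = fst p"
definition pr :: "params \<Rightarrow> real" where "pr p = fst (snd p)"
definition pb :: "params \<Rightarrow> real" where "pb p = fst (snd (snd p))"
definition pa :: "params \<Rightarrow> real" where "pa p = fst (snd (snd (snd p)))"
definition pm :: "params \<Rightarrow> real" where "pm p = snd (snd (snd (snd p)))"

definition Bf :: "params \<Rightarrow> real" where "Bf p = pb p * pA p - pm p - pa p * pb p ^ 2"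
definition Df :: "params \<Rightarrow> real" where
  "Df p = Bf p ^ 2 + 4 * pb p ^ 2 * (pa p * (pb p * pA p - pm p) - pr p)"
definition I2f :: "params \<Rightarrow> real" where "I2f p = (Bf p + sqrt (Df p)) / (2 * pb p ^ 2)"
definition Tf :: "params \<Rightarrow> real" where
  "Tf p = (pA p - pb p * I2f p) * (pa p + I2f p) ^ 2 - pr p * I2f p"
definition Rf :: "params \<Rightarrow> real" where "Rf p = pb p * pA p / (pm p + pr p / pa p)"

definition W :: "params set" where "W = {0<..} \<times> {0<..} \<times> {0<..} \<times> {0<..} \<times> {0<..}"

lemma W_iff: "(A,r,b0,a,mu) \<in> W \<longleftrightarrow> A > 0 \<and> r > 0 \<and> b0 > 0 \<and> a > 0 \<and> mu > 0"
  by (simp add: W_def)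

lemma open_W: "open W" unfolding W_def by (intro open_Times open_greaterThan)

lemma W_pos: "p \<in> W \<Longrightarrow> pA p > 0 \<and> pr p > 0 \<and> pb p > 0 \<and> pa p > 0 \<and> pm p > 0"
  by (auto simp: W_def pA_def pr_def pb_def pa_def pm_def)

lemma cont_comp: "continuous_on UNIV pA" "continuous_on UNIV pr" "continuous_on UNIV pb"
  "continuous_on UNIV pa" "continuous_on UNIV pm"
  unfolding pA_def pr_def pb_def pa_def pm_def by (auto intro!: continuous_intros)

lemma cont_W: "continuous_on W Rf" "continuous_on W Bf" "continuous_on W Df" "continuous_on W Tf"
proof -
  have c: "continuous_on W pA" "continuous_on W pr" "continuous_on W pb"
    "continuous_on W pa" "continuous_on W pm"
    using cont_comp by (auto intro: continuous_on_subset)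
  have nz: "\<forall>p\<in>W. pm p + pr p / pa p \<noteq> 0" "\<forall>p\<in>W. pa p \<noteq> 0" "\<forall>p\<in>W. 2 * pb p ^ 2 \<noteq> 0"
  proof (safe)
    fix p assume "p \<in> W" "pm p + pr p / pa p = 0"
    moreover have "pr p / pa p > 0" using W_pos[OF \<open>p \<in> W\<close>] by simp
    ultimately show False using W_pos[OF \<open>p \<in> W\<close>] by linarith
  qed (auto dest: W_pos)
  show cB: "continuous_on W Bf" unfolding Bf_def by (intro continuous_intros c)
  show cD: "continuous_on W Df" unfolding Df_def by (intro continuous_intros c cB)
  have cI: "continuous_on W I2f" unfolding I2f_def
    by (intro continuous_intros c cB cD nz)
  show "continuous_on W Tf" unfolding Tf_def by (intro continuous_intros c cI)
  show "continuous_on W Rf" unfolding Rf_def by (intro continuous_intros c nz)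
qed

theorem theoremA:
  shows "\<exists>U :: params set. open U \<and> U \<noteq> {} \<and>
    U \<subseteq> {(A, r, b0, a, mu). A > 0 \<and> r > 0 \<and> b0 > 0 \<and> a > 0 \<and> mu > 0} \<and>
    (\<forall>p\<in>U. R0 p < 1 \<and>
       (\<exists>e1 e2. e1 \<noteq> e2 \<and> endemic_equilibria p = {e1, e2} \<and>
                is_sink p e1 \<and> is_saddle p e2))"
proof -
  define U where "U = (W \<inter> Rf -` {..<1}) \<inter> (W \<inter> Bf -` {0<..}) \<inter> (W \<inter> Df -` {0<..}) \<inter> (W \<inter> Tf -` {0<..})"
  have "open U" unfolding U_def
    by (intro open_Int continuous_open_preimage cont_W open_W open_lessThan open_greaterThan)
  moreover have "(5,6,1,1,1) \<in> U"
  proof -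
    have D: "Df (5,6,1,1,1) = 1" by (simp add: Df_def Bf_def pA_def pr_def pb_def pa_def pm_def)
    have I: "I2f (5,6,1,1,1) = 2" by (simp add: I2f_def D Bf_def pA_def pr_def pb_def pa_def pm_def)
    show ?thesis unfolding U_def
      by (simp add: W_iff D Tf_def I Rf_def Bf_def pA_def pr_def pb_def pa_def pm_def)
  qed
  moreover have "U \<subseteq> {(A, r, b0, a, mu). A > 0 \<and> r > 0 \<and> b0 > 0 \<and> a > 0 \<and> mu > 0}"
    unfolding U_def using W_iff by auto
  moreover have "R0 p < 1 \<and>
       (\<exists>e1 e2. e1 \<noteq> e2 \<and> endemic_equilibria p = {e1, e2} \<and>
                is_sink p e1 \<and> is_saddle p e2)" if "p \<in> U" for p
  proof -
    obtain A r b0 a mu where p: "p = (A,r,b0,a,mu)" by (cases p) auto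
    have h: "p \<in> W" "Rf p < 1" "Bf p > 0" "Df p > 0" "Tf p > 0" using that unfolding U_def by auto
    have pos: "A > 0" "r > 0" "b0 > 0" "a > 0" "mu > 0" using h(1) p W_iff by auto
    have R: "b0*A/(mu + r/a) < 1" using h(2) p by (simp add: Rf_def pA_def pr_def pb_def pa_def pm_def)
    have R0: "R0 p < 1" using R p by (simp add: R0_def)
    show ?thesis using R0 main[OF pos R] h(3,4,5) p
      by (simp add: Tf_def I2f_def Df_def Bf_def pA_def pr_def pb_def pa_def pm_def)
  qed
  ultimately show ?thesis by blast
qed

end
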